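(* Let $\mathcal{S}$ be a finite set of states and, for each $s\in\mathcal{S}$, let $\mathcal{A}(s)$ be a finite nonempty set of actions. For logits $\theta=(\theta_{s,a})$ let $\pi_\theta(a\mid s)=\exp(\theta_{s,a})/\sum_{a'\in\mathcal{A}(s)}\exp(\theta_{s,a'})$. Fix old logits $\theta_{\mathrm{old}}$, current logits $\theta^k$, an advantage function $A:\{(s,a)\}\to\mathbb{R}$, weights $d(s)\ge 0$ (the state visitation distribution of $\pi_{\theta_{\mathrm{old}}}$), a learning rate $\eta>0$, $\epsilon\in(0,1)$ and $\delta>0$. Write $w_{s,a}(\theta)=\pi_\theta(a\mid s)/\pi_{\theta_{\mathrm{old}}}(a\mid s)$, and for $l<u$ let $$J^{l,u}(\theta)=\sum_{s\in\mathcal{S}} d(s)\sum_{a\in\mathcal{A}(s)}\pi_{\theta_{\mathrm{old}}}(a\mid s)\,\mathrm{clip}\big(w_{s,a}(\theta),l,u\big)\,A(s,a),$$ where $\mathrm{clip}(w,l,u)=\min(\max(w,l),u)$. Let $0<l_\delta<1<u_\delta$ be the two solutions of $w-1-\log w=\delta$. Define the one-step updates $$\theta^{\mathrm{ratio},k+1}=\theta^k+\eta\,\nabla_\theta J^{1-\epsilon,1+\epsilon}(\theta^k),\qquad \theta^{\mathrm{ATR},k+1}=\theta^k+\eta\,\nabla_\theta J^{l_\delta,u_\delta}(\theta^k),$$ and $\Delta\theta_{s,a}=\theta^{\mathrm{ATR},k+1}_{s,a}-\theta^{\mathrm{ratio},k+1}_{s,a}$. Assume that no ratio $w_{s,a}(\theta^k)$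 equals any of $1-\epsilon,\,1+\epsilon,\,l_\delta,\,u_\delta$. Fix $s\in\mathcal{S}$. (a) If $1+\epsilon=u_\delta$, let $X_-(s)=\{a\in\mathcal{A}(s): w_{s,a}(\theta^k)\in[1-\epsilon,\,l_\delta]\}$ with indicator $\mathbb{I}_{X_-(s)}$. Then for every $a\in\mathcal{A}(s)$, $$\Delta\theta_{s,a}=-\eta\, d(s)\,\pi_{\theta^k}(a\mid s)\Big[A(s,a)\mathbb{I}_{X_-(s)}(a)-\mathbb{E}_{a'\sim\pi_{\theta^k}(\cdot\mid s)}\big[A(s,a')\mathbb{I}_{X_-(s)}(a')\big]\Big].$$ (b) If $1-\epsilon=l_\delta$, let $X_+(s)=\{a\in\mathcal{A}(s): w_{s,a}(\theta^k)\in[1+\epsilon,\,u_\delta]\}$ with indicator $\mathbb{I}_{X_+(s)}$. Then for every $a\in\mathcal{A}(s)$, $$\Delta\theta_{s,a}=\eta\, d(s)\,\pi_{\theta^k}(a\mid s)\Big[A(s,a)\mathbb{I}_{X_+(s)}(a)-\mathbb{E}_{a'\sim\pi_{\theta^k}(\cdot\mid s)}\big[A(s,a')\mathbb{I}_{X_+(s)}(a')\big]\Big].$$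
   Context: This compares one full-batch policy-gradient step with a softmax (tabular) policy under symmetric ratio-based clipping of the likelihood ratio to $[1-\epsilon,1+\epsilon]$ ("ratio-based clipping") versus clipping to $[l_\delta,u_\delta]$, the interval on which the KL3 estimator $w-1-\log w$ is at most $\delta$ ("ATR-based clipping"). *)

theory Defs
  imports "HOL-Analysis.Analysis"
begin

definition softmax_pol :: "('s \<Rightarrow> 'a set) \<Rightarrow> ('s \<Rightarrow> 'a \<Rightarrow> real) \<Rightarrow> 's \<Rightarrow> 'a \<Rightarrow> real" where
  "softmax_pol Act \<theta> s a = exp (\<theta> s a) / (\<Sum>a'\<in>Act s. exp (\<theta> s a'))"

definition clip :: "real \<Rightarrow> real \<Rightarrow> real \<Rightarrow> real" where
  "clip w l u = min (max w l) u"

definition ratio :: "('s \<Rightarrow> 'a set) \<Rightarrow> ('s \<Rightarrow> 'a \<Rightarrow> real) \<Rightarrow> ('s \<Rightarrow> 'a \<Rightarrow> real) \<Rightarrow> 's \<Rightarrow> 'a \<Rightarrow> real" where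
  "ratio Act \<theta>old \<theta> s a = softmax_pol Act \<theta> s a / softmax_pol Act \<theta>old s a"

definition Jclip :: "'s set \<Rightarrow> ('s \<Rightarrow> 'a set) \<Rightarrow> ('s \<Rightarrow> real) \<Rightarrow> ('s \<Rightarrow> 'a \<Rightarrow> real)
    \<Rightarrow> ('s \<Rightarrow> 'a \<Rightarrow> real) \<Rightarrow> real \<Rightarrow> real \<Rightarrow> ('s \<Rightarrow> 'a \<Rightarrow> real) \<Rightarrow> real" where
  "Jclip S Act d Adv \<theta>old l u \<theta> =
     (\<Sum>s\<in>S. d s * (\<Sum>a\<in>Act s. softmax_pol Act \<theta>old s a * clip (ratio Act \<theta>old \<theta> s a) l u * Adv s a))"

definition grad_comp :: "(('s \<Rightarrow> 'a \<Rightarrow> real) \<Rightarrow> real) \<Rightarrow> ('s \<Rightarrow> 'a \<Rightarrow> real) \<Rightarrow> 's \<Rightarrow> 'a \<Rightarrow> real" where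
  "grad_comp F \<theta> s a = deriv (\<lambda>t. F (\<theta>(s := (\<theta> s)(a := t)))) (\<theta> s a)"

definition pg_step :: "real \<Rightarrow> (('s \<Rightarrow> 'a \<Rightarrow> real) \<Rightarrow> real) \<Rightarrow> ('s \<Rightarrow> 'a \<Rightarrow> real) \<Rightarrow> ('s \<Rightarrow> 'a \<Rightarrow> real)" where
  "pg_step \<eta> F \<theta> = (\<lambda>s a. \<theta> s a + \<eta> * grad_comp F \<theta> s a)"

end

theory Submission
  imports Defs
begin

lemma kl_decr:
  fixes a b :: real assumes "0 < a" "a < b" "b \<le> 1"
  shows "b - 1 - ln b < a - 1 - ln a"
proof -
  have "(\<lambda>w. -(w - 1 - ln w)) a < (\<lambda>w. -(w - 1 - ln w)) b"
  proof (rule DERIV_pos_imp_increasing_open[OF assms(2)])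
    fix x assume x: "a < x" "x < b"
    have "DERIV (\<lambda>w. -(w - 1 - ln w)) x :> -(1 - 0 - 1/x)"
      using x assms by (auto intro!: derivative_eq_intros)
    moreover have "-(1 - 0 - 1/x) > 0" using x assms by (simp add: field_simps)
    ultimately show "\<exists>y. DERIV (\<lambda>w. -(w - 1 - ln w)) x :> y \<and> y > 0" by blast
  next
    show "continuous_on {a..b} (\<lambda>w. -(w - 1 - ln w))"
      using assms by (auto intro!: continuous_intros)
  qed
  then show ?thesis by simp
qed

lemma kl_incr:
  fixes a b :: real assumes "1 \<le> a" "a < b"
  shows "a - 1 - ln a < b - 1 - ln b"
proof -
  have "(\<lambda>w. (w - 1 - ln w)) a < (\<lambda>w. (w - 1 - ln w)) b"
  proof (rule DERIV_pos_imp_increasing_open[OF assms(2)])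
    fix x assume x: "a < x" "x < b"
    have "DERIV (\<lambda>w. (w - 1 - ln w)) x :> (1 - 0 - 1/x)"
      using x assms by (auto intro!: derivative_eq_intros)
    moreover have "(1 - 0 - 1/x) > 0" using x assms by (simp add: field_simps)
    ultimately show "\<exists>y. DERIV (\<lambda>w. (w - 1 - ln w)) x :> y \<and> y > 0" by blast
  next
    show "continuous_on {a..b} (\<lambda>w. (w - 1 - ln w))"
      using assms by (auto intro!: continuous_intros)
  qed
  then show ?thesis by simp
qed

lemma eps_ineq:
  fixes e :: real assumes "0 < e" "e < 1"
  shows "(1 + e) - 1 - ln (1 + e) < (1 - e) - 1 - ln (1 - e)"
proof -
  let ?g = "\<lambda>x::real. ln (1 + x) - ln (1 - x) - 2 * x"
  have "?g 0 < ?g e"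
  proof (rule DERIV_pos_imp_increasing_open[OF assms(1)])
    fix x :: real assume x: "0 < x" "x < e"
    have xx: "x * x < 1" using x assms using mult_strict_left_mono[of x 1 x] by linarith
    have "DERIV ?g x :> (1/(1+x) - (-1)/(1-x) - 2)"
      using x assms xx by (auto intro!: derivative_eq_intros simp: field_simps)
    moreover have "(1/(1+x) - (-1)/(1-x) - 2) > 0"
    proof -
      have "1/(1+x) - (-1)/(1-x) - 2 = 2*x^2/((1+x)*(1-x))"
      proof -
        have "x * x < 1" using x assms using mult_strict_left_mono[of x 1 x] by linarith
        then show ?thesis using x assms by (simp add: field_simps power2_eq_square)
      qed
      also have "\<dots> > 0" using x assms by (auto intro!: divide_pos_pos mult_pos_pos)
      finally show ?thesis .
    qed
    ultimately show "\<exists>y. DERIV ?g x :> y \<and> y > 0" by blast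
  next
    show "continuous_on {0..e} ?g"
      using assms by (auto intro!: continuous_intros)
  qed
  then show ?thesis by simp
qed

lemma softmax_deriv:
  fixes \<theta> :: "'s \<Rightarrow> 'a \<Rightarrow> real"
  assumes fin: "finite (Act s)" and a: "a \<in> Act s"
  shows "((\<lambda>t. softmax_pol Act (\<theta>(s := (\<theta> s)(a := t))) s b) has_real_derivative
           softmax_pol Act \<theta> s b * ((if b = a then 1 else 0) - softmax_pol Act \<theta> s a)) (at (\<theta> s a))"
proof -
  define Z where "Z = (\<Sum>c\<in>Act s. exp (\<theta> s c))"
  have Zpos: "Z > 0" unfolding Z_def using fin a by (intro sum_pos) auto
  have N: "((\<lambda>t. exp ((\<theta>(s := (\<theta> s)(a := t))) s c)) has_real_derivative
             (if c = a then exp (\<theta> s a) else 0)) (at (\<theta> s a))" for c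
    by (cases "c = a") (auto intro!: derivative_eq_intros)
  have D: "((\<lambda>t. \<Sum>c\<in>Act s. exp ((\<theta>(s := (\<theta> s)(a := t))) s c)) has_real_derivative
             (\<Sum>c\<in>Act s. if c = a then exp (\<theta> s a) else 0)) (at (\<theta> s a))"
    by (rule DERIV_sum) (rule N)
  have Dv: "(\<Sum>c\<in>Act s. if c = a then exp (\<theta> s a) else 0) = exp (\<theta> s a)"
    using fin a by simp
  have Z0: "(\<Sum>c\<in>Act s. exp ((\<theta>(s := (\<theta> s)(a := \<theta> s a))) s c)) = Z"
    by (simp add: Z_def)
  have Q: "((\<lambda>t. exp ((\<theta>(s := (\<theta> s)(a := t))) s b) / (\<Sum>c\<in>Act s. exp ((\<theta>(s := (\<theta> s)(a := t))) s c)))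
      has_real_derivative
      ((if b = a then exp (\<theta> s a) else 0) * Z - exp (\<theta> s b) * exp (\<theta> s a)) / (Z * Z)) (at (\<theta> s a))"
    using DERIV_divide[OF N[of b] D] Zpos Dv Z0 by simp
  have eq: "((if b = a then exp (\<theta> s a) else 0) * Z - exp (\<theta> s b) * exp (\<theta> s a)) / (Z * Z)
        = softmax_pol Act \<theta> s b * ((if b = a then 1 else 0) - softmax_pol Act \<theta> s a)"
    using Zpos unfolding softmax_pol_def Z_def[symmetric] by (auto simp: field_simps)
  show ?thesis using Q unfolding eq softmax_pol_def .
qed
lemma clip_deriv:
  fixes g :: "real \<Rightarrow> real"
  assumes lu: "l < u" and g: "(g has_real_derivative g') (at x)"
    and nk: "g x \<noteq> l" "g x \<noteq> u"
  shows "((\<lambda>t. clip (g t) l u) has_real_derivative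
            (if l < g x \<and> g x < u then g' else 0)) (at x)"
proof -
  have tn: "(g \<longlongrightarrow> g x) (nhds x)"
    using DERIV_isCont[OF g] by (simp add: isCont_def tendsto_at_iff_tendsto_nhds)
  consider "g x < l" | "l < g x \<and> g x < u" | "u < g x" using nk lu by linarith
  then show ?thesis
  proof cases
    case 1
    have ev: "eventually (\<lambda>t. g t < l) (nhds x)" using order_tendstoD(2)[OF tn 1] .
    have "((\<lambda>t. l) has_real_derivative 0) (at x)" by simp
    moreover have "eventually (\<lambda>t. l = clip (g t) l u) (nhds x)"
      using ev by eventually_elim (use lu in \<open>auto simp: clip_def\<close>)
    ultimately show ?thesis using 1 DERIV_cong_ev by fastforce
  next
    case 2
    have ev: "eventually (\<lambda>t. l < g t \<and> g t < u) (nhds x)"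
      using order_tendstoD(1)[OF tn] order_tendstoD(2)[OF tn] 2 eventually_conj by blast
    moreover have "eventually (\<lambda>t. g t = clip (g t) l u) (nhds x)"
      using ev by eventually_elim (auto simp: clip_def)
    ultimately show ?thesis using 2 g DERIV_cong_ev by fastforce
  next
    case 3
    have ev: "eventually (\<lambda>t. u < g t) (nhds x)" using order_tendstoD(1)[OF tn 3] .
    have "((\<lambda>t. u) has_real_derivative 0) (at x)" by simp
    moreover have "eventually (\<lambda>t. u = clip (g t) l u) (nhds x)"
      using ev by eventually_elim (use lu in \<open>auto simp: clip_def\<close>)
    ultimately show ?thesis using 3 DERIV_cong_ev by fastforce
  qed
qed

lemma grad_Jclip:
  fixes \<theta> \<theta>old :: "'s \<Rightarrow> 'a \<Rightarrow> real"
  assumes finS: "finite S" and finA: "\<And>s. s \<in> S \<Longrightarrow> finite (Act s)"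
    and neA: "\<And>s. s \<in> S \<Longrightarrow> Act s \<noteq> {}"
    and s: "s \<in> S" and a: "a \<in> Act s" and lu: "l < u"
    and nk: "\<And>b. b \<in> Act s \<Longrightarrow> ratio Act \<theta>old \<theta> s b \<noteq> l \<and> ratio Act \<theta>old \<theta> s b \<noteq> u"
  shows "grad_comp (Jclip S Act d Adv \<theta>old l u) \<theta> s a =
    d s * softmax_pol Act \<theta> s a *
      (Adv s a * indicator {b \<in> Act s. l < ratio Act \<theta>old \<theta> s b \<and> ratio Act \<theta>old \<theta> s b < u} a
       - (\<Sum>b\<in>Act s. softmax_pol Act \<theta> s b *
           (Adv s b * indicator {b \<in> Act s. l < ratio Act \<theta>old \<theta> s b \<and> ratio Act \<theta>old \<theta> s b < u} b)))"
proof -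
  define I where "I = {b \<in> Act s. l < ratio Act \<theta>old \<theta> s b \<and> ratio Act \<theta>old \<theta> s b < u}"
  define P where "P = softmax_pol Act \<theta> s"
  define Po where "Po = softmax_pol Act \<theta>old s"
  define th where "th = (\<lambda>t. \<theta>(s := (\<theta> s)(a := t)))"
  have th0: "th (\<theta> s a) = \<theta>" by (simp add: th_def)
  have Popos: "Po b > 0" if "b \<in> Act s" for b
    unfolding Po_def softmax_pol_def using finA[OF s] that by (intro divide_pos_pos sum_pos) auto
  define C where "C = (\<lambda>b. if l < ratio Act \<theta>old \<theta> s b \<and> ratio Act \<theta>old \<theta> s b < u
                         then P b * ((if b = a then 1 else 0) - P a) / Po b else 0)"
  have Db: "((\<lambda>t. softmax_pol Act \<theta>old s b * clip (ratio Act \<theta>old (th t) s b) l u * Adv s b)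
           has_real_derivative Po b * C b * Adv s b) (at (\<theta> s a))" if b: "b \<in> Act s" for b
  proof -
    have r: "((\<lambda>t. ratio Act \<theta>old (th t) s b) has_real_derivative
             P b * ((if b = a then 1 else 0) - P a) / Po b) (at (\<theta> s a))"
      unfolding ratio_def th_def P_def Po_def
      by (rule DERIV_cdivide[OF softmax_deriv[of Act s a \<theta> b, OF finA[OF s] a]])
    have "((\<lambda>t. clip (ratio Act \<theta>old (th t) s b) l u) has_real_derivative C b) (at (\<theta> s a))"
      using clip_deriv[OF lu r] nk[OF b] unfolding C_def th0 by simp
    then show ?thesis unfolding Po_def
      by (intro DERIV_cmult_right DERIV_cmult)
  qed
  define D where "D = (\<lambda>s'. if s' = s then d s * (\<Sum>b\<in>Act s. Po b * C b * Adv s b) else 0)"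
  have Ds: "((\<lambda>t. d s' * (\<Sum>b\<in>Act s'. softmax_pol Act \<theta>old s' b * clip (ratio Act \<theta>old (th t) s' b) l u * Adv s' b))
           has_real_derivative D s') (at (\<theta> s a))" if s': "s' \<in> S" for s'
  proof (cases "s' = s")
    case True
    then show ?thesis unfolding D_def using Db by (auto intro!: DERIV_cmult DERIV_sum)
  next
    case False
    have "ratio Act \<theta>old (th t) s' b = ratio Act \<theta>old \<theta> s' b" for t b
      using False unfolding th_def ratio_def softmax_pol_def by simp
    then show ?thesis unfolding D_def using False by simp
  qed
  have DER: "((\<lambda>t. Jclip S Act d Adv \<theta>old l u (th t)) has_real_derivative (\<Sum>s'\<in>S. D s')) (at (\<theta> s a))"
    unfolding Jclip_def by (rule DERIV_sum) (rule Ds)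
  have sumD: "(\<Sum>s'\<in>S. D s') = d s * (\<Sum>b\<in>Act s. Po b * C b * Adv s b)"
    unfolding D_def using finS s by simp
  have inner: "(\<Sum>b\<in>Act s. Po b * C b * Adv s b) =
      P a * (Adv s a * indicator I a - (\<Sum>b\<in>Act s. P b * (Adv s b * indicator I b)))"
  proof -
    have "(\<Sum>b\<in>Act s. Po b * C b * Adv s b) =
          (\<Sum>b\<in>Act s. (if b = a then P a * Adv s a * indicator I a else 0)
               - P a * (P b * (Adv s b * indicator I b)))"
      by (rule sum.cong) (auto simp: C_def I_def Popos field_simps dest: Popos)
    also have "\<dots> = P a * Adv s a * indicator I a - P a * (\<Sum>b\<in>Act s. P b * (Adv s b * indicator I b))"
      using finA[OF s] a by (simp add: sum_subtractf sum_distrib_left)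
    finally show ?thesis by (simp add: algebra_simps)
  qed
  have "grad_comp (Jclip S Act d Adv \<theta>old l u) \<theta> s a = (\<Sum>s'\<in>S. D s')"
    unfolding grad_comp_def using DERIV_imp_deriv[OF DER] unfolding th_def .
  then show ?thesis unfolding sumD inner I_def P_def by simp
qed

theorem theorem3:
  fixes S :: "'s set" and Act :: "'s \<Rightarrow> 'a set"
    and \<theta>old \<theta>k :: "'s \<Rightarrow> 'a \<Rightarrow> real" and Adv :: "'s \<Rightarrow> 'a \<Rightarrow> real"
    and d :: "'s \<Rightarrow> real" and \<eta> \<epsilon> \<delta> l\<^sub>\<delta> u\<^sub>\<delta> :: real and s :: 's
  assumes finS: "finite S"
    and finA: "\<And>s. s \<in> S \<Longrightarrow> finite (Act s)"
    and neA: "\<And>s. s \<in> S \<Longrightarrow> Act s \<noteq> {}"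
    and d_nonneg: "\<And>s. s \<in> S \<Longrightarrow> d s \<ge> 0"
    and eta_pos: "\<eta> > 0"
    and eps: "0 < \<epsilon>" "\<epsilon> < 1"
    and delta_pos: "\<delta> > 0"
    and l_bounds: "0 < l\<^sub>\<delta>" "l\<^sub>\<delta> < 1"
    and u_bounds: "1 < u\<^sub>\<delta>"
    and l_sol: "l\<^sub>\<delta> - 1 - ln l\<^sub>\<delta> = \<delta>"
    and u_sol: "u\<^sub>\<delta> - 1 - ln u\<^sub>\<delta> = \<delta>"
    and no_kink: "\<And>s' a'. s' \<in> S \<Longrightarrow> a' \<in> Act s' \<Longrightarrow>
        ratio Act \<theta>old \<theta>k s' a' \<notin> {1 - \<epsilon>, 1 + \<epsilon>, l\<^sub>\<delta>, u\<^sub>\<delta>}"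
    and s_in: "s \<in> S"
  defines "\<theta>ratio \<equiv> pg_step \<eta> (Jclip S Act d Adv \<theta>old (1 - \<epsilon>) (1 + \<epsilon>)) \<theta>k"
    and "\<theta>ATR \<equiv> pg_step \<eta> (Jclip S Act d Adv \<theta>old l\<^sub>\<delta> u\<^sub>\<delta>) \<theta>k"
    and "Xm \<equiv> {a \<in> Act s. ratio Act \<theta>old \<theta>k s a \<in> {1 - \<epsilon> .. l\<^sub>\<delta>}}"
    and "Xp \<equiv> {a \<in> Act s. ratio Act \<theta>old \<theta>k s a \<in> {1 + \<epsilon> .. u\<^sub>\<delta>}}"
  shows "(1 + \<epsilon> = u\<^sub>\<delta> \<longrightarrow> (\<forall>a \<in> Act s.
            \<theta>ATR s a - \<theta>ratio s a =
              - \<eta> * d s * softmax_pol Act \<theta>k s a *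
                (Adv s a * indicator Xm a
                 - (\<Sum>a'\<in>Act s. softmax_pol Act \<theta>k s a' * (Adv s a' * indicator Xm a')))))
       \<and> (1 - \<epsilon> = l\<^sub>\<delta> \<longrightarrow> (\<forall>a \<in> Act s.
            \<theta>ATR s a - \<theta>ratio s a =
              \<eta> * d s * softmax_pol Act \<theta>k s a *
                (Adv s a * indicator Xp a
                 - (\<Sum>a'\<in>Act s. softmax_pol Act \<theta>k s a' * (Adv s a' * indicator Xp a')))))"
proof -
  have a_ne: "u\<^sub>\<delta> \<noteq> 1 + \<epsilon> \<or> 1 - \<epsilon> < l\<^sub>\<delta>"
  proof (rule ccontr)
    assume "\<not> ?thesis"
    then have u: "u\<^sub>\<delta> = 1 + \<epsilon>" and l: "l\<^sub>\<delta> \<le> 1 - \<epsilon>" by auto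
    have e: "(1 + \<epsilon>) - 1 - ln (1 + \<epsilon>) < (1 - \<epsilon>) - 1 - ln (1 - \<epsilon>)"
      using eps_ineq eps by blast
    have "(1 - \<epsilon>) - 1 - ln (1 - \<epsilon>) \<le> l\<^sub>\<delta> - 1 - ln l\<^sub>\<delta>"
      using kl_decr[of l\<^sub>\<delta> "1 - \<epsilon>"] l l_bounds eps by (cases "l\<^sub>\<delta> = 1 - \<epsilon>") auto
    then show False using e u_sol[unfolded u] l_sol by linarith
  qed
  have b_ne: "l\<^sub>\<delta> \<noteq> 1 - \<epsilon> \<or> 1 + \<epsilon> < u\<^sub>\<delta>"
  proof (rule ccontr)
    assume "\<not> ?thesis"
    then have l: "l\<^sub>\<delta> = 1 - \<epsilon>" and u: "u\<^sub>\<delta> \<le> 1 + \<epsilon>" by auto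
    have e: "(1 + \<epsilon>) - 1 - ln (1 + \<epsilon>) < (1 - \<epsilon>) - 1 - ln (1 - \<epsilon>)"
      using eps_ineq eps by blast
    have "u\<^sub>\<delta> - 1 - ln u\<^sub>\<delta> \<le> (1 + \<epsilon>) - 1 - ln (1 + \<epsilon>)"
      using kl_incr[of u\<^sub>\<delta> "1 + \<epsilon>"] u u_bounds by (cases "u\<^sub>\<delta> = 1 + \<epsilon>") auto
    then show False using e u_sol l_sol[unfolded l] by linarith
  qed
  define r where "r = ratio Act \<theta>old \<theta>k s"
  define P where "P = softmax_pol Act \<theta>k s"
  define I1 where "I1 = {b \<in> Act s. l\<^sub>\<delta> < ratio Act \<theta>old \<theta>k s b \<and> ratio Act \<theta>old \<theta>k s b < u\<^sub>\<delta>}"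
  define I2 where "I2 = {b \<in> Act s. 1 - \<epsilon> < ratio Act \<theta>old \<theta>k s b \<and> ratio Act \<theta>old \<theta>k s b < 1 + \<epsilon>}"
  have nk: "ratio Act \<theta>old \<theta>k s b \<noteq> 1 - \<epsilon> \<and> ratio Act \<theta>old \<theta>k s b \<noteq> 1 + \<epsilon>
     \<and> ratio Act \<theta>old \<theta>k s b \<noteq> l\<^sub>\<delta> \<and> ratio Act \<theta>old \<theta>k s b \<noteq> u\<^sub>\<delta>" if "b \<in> Act s" for b
    using no_kink[OF s_in that] by auto
  have diff: "\<theta>ATR s a - \<theta>ratio s a = \<eta> * d s * P a *
      (Adv s a * (indicator I1 a - indicator I2 a)
       - (\<Sum>b\<in>Act s. P b * (Adv s b * (indicator I1 b - indicator I2 b))))" if a: "a \<in> Act s" for a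
  proof -
    have g1: "grad_comp (Jclip S Act d Adv \<theta>old l\<^sub>\<delta> u\<^sub>\<delta>) \<theta>k s a =
       d s * P a * (Adv s a * indicator I1 a - (\<Sum>b\<in>Act s. P b * (Adv s b * indicator I1 b)))"
      unfolding P_def I1_def
      by (rule grad_Jclip[of S Act s a l\<^sub>\<delta> u\<^sub>\<delta> \<theta>old \<theta>k, OF finS finA neA s_in a]) (use l_bounds u_bounds nk in auto)
    have g2: "grad_comp (Jclip S Act d Adv \<theta>old (1 - \<epsilon>) (1 + \<epsilon>)) \<theta>k s a =
       d s * P a * (Adv s a * indicator I2 a - (\<Sum>b\<in>Act s. P b * (Adv s b * indicator I2 b)))"
      unfolding P_def I2_def
      by (rule grad_Jclip[of S Act s a "1 - \<epsilon>" "1 + \<epsilon>" \<theta>old \<theta>k, OF finS finA neA s_in a]) (use eps nk in auto)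
    have ss: "(\<Sum>b\<in>Act s. P b * (Adv s b * (indicator I1 b - indicator I2 b))) =
        (\<Sum>b\<in>Act s. P b * (Adv s b * indicator I1 b)) - (\<Sum>b\<in>Act s. P b * (Adv s b * indicator I2 b))"
      by (simp add: sum_subtractf[symmetric] algebra_simps)
    show ?thesis
      unfolding \<theta>ATR_def \<theta>ratio_def pg_step_def g1 g2 ss by (simp add: algebra_simps)
  qed
  have indA: "indicator I1 b - indicator I2 b = - (indicator Xm b :: real)"
    if "b \<in> Act s" "1 + \<epsilon> = u\<^sub>\<delta>" for b
    using nk[OF that(1)] that a_ne l_bounds u_bounds eps unfolding I1_def I2_def Xm_def indicator_def by auto
  have indB: "indicator I1 b - indicator I2 b = (indicator Xp b :: real)"
    if "b \<in> Act s" "1 - \<epsilon> = l\<^sub>\<delta>" for b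
    using nk[OF that(1)] that b_ne l_bounds u_bounds eps unfolding I1_def I2_def Xp_def indicator_def by auto
  show ?thesis
  proof (intro conjI impI ballI)
    fix a assume h: "1 + \<epsilon> = u\<^sub>\<delta>" and a: "a \<in> Act s"
    have "(\<Sum>b\<in>Act s. P b * (Adv s b * (indicator I1 b - indicator I2 b))) =
          (\<Sum>b\<in>Act s. - (P b * (Adv s b * indicator Xm b)))"
      by (rule sum.cong) (use indA h in auto)
    then show "\<theta>ATR s a - \<theta>ratio s a =
              - \<eta> * d s * softmax_pol Act \<theta>k s a *
                (Adv s a * indicator Xm a
                 - (\<Sum>a'\<in>Act s. softmax_pol Act \<theta>k s a' * (Adv s a' * indicator Xm a')))"
      using diff[OF a] indA[OF a h] unfolding P_def by (simp add: sum_negf algebra_simps)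
  next
    fix a assume h: "1 - \<epsilon> = l\<^sub>\<delta>" and a: "a \<in> Act s"
    have "(\<Sum>b\<in>Act s. P b * (Adv s b * (indicator I1 b - indicator I2 b))) =
          (\<Sum>b\<in>Act s. P b * (Adv s b * indicator Xp b))"
      by (rule sum.cong) (use indB h in auto)
    then show "\<theta>ATR s a - \<theta>ratio s a =
              \<eta> * d s * softmax_pol Act \<theta>k s a *
                (Adv s a * indicator Xp a
                 - (\<Sum>a'\<in>Act s. softmax_pol Act \<theta>k s a' * (Adv s a' * indicator Xp a')))"
      using diff[OF a] indB[OF a h] unfolding P_def by (simp add: algebra_simps)
  qed
qed

end
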